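(* Let $A$ (in $\mathcal H$) and $B$ (in $\mathcal K$) be closed densely defined operators such that $A\dashv B$ via a (possibly unbounded) intertwining operator $T_{AB}$ and $B\dashv A$ via a (possibly unbounded) intertwining operator $T_{BA}$, and assume that both $T_{AB}^{-1}$ and $T_{BA}^{-1}$ are everywhere defined and bounded. Then $\sigma_p(A)=\sigma_p(B)$, $\rho(A)=\rho(B)$, and hence $\sigma(A)=\sigma(B)$.
   Context: A closed densely defined operator $T:D(T)\subseteq\mathcal H\to\mathcal K$ is an intertwining operator for $A$ and $B$ if $D(A)\subseteq D(T)$ and $AD(A)\subseteq D(T)$, $TD(A)\subseteq D(B)$, and $BT\xi=TA\xi$ for all $\xi\in D(A)$. $A\dashv B$ means there is such an intertwining operator that is injective with densely defined inverse. $\rho(A)$ is the set of $\lambda$ with $A-\lambda I$ injective and $(A-\lambda I)^{-1}$ bounded everywhere defined; $\sigma(A)=\mathbb C\setminus\rho(A)$; $\sigma_p$ is the set of eigenvalues. *)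

theory Defs
  imports "HOL-Analysis.Analysis"
begin

text \<open>A complex Hilbert space is modelled as a real Hilbert space (complete real inner
  product space) together with a complex structure: an isometric real-linear map
  iunit (multiplication by the imaginary unit) with iunit (iunit x) = - x.
  The complex scalar multiplication is then c x = Re c x + Im c (iunit x), and the complex
  inner product is x \<bullet> y + i (x \<bullet> iunit y) (up to convention); the norm is the usual one.\<close>

class complex_hilbert = real_inner + complete_space +
  fixes iunit :: "'a \<Rightarrow> 'a"
  assumes iunit_add: "iunit (x + y) = iunit x + iunit y"
    and iunit_scaleR: "iunit (r *\<^sub>R x) = r *\<^sub>R iunit x"
    and iunit_iunit: "iunit (iunit x) = - x"
    and iunit_inner: "inner (iunit x) (iunit y) = inner x y"

definition scaleC :: "complex \<Rightarrow> 'a::complex_hilbert \<Rightarrow> 'a" (infixr "*\<^sub>C" 75) where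
  "c *\<^sub>C x = Re c *\<^sub>R x + Im c *\<^sub>R iunit x"

type_synonym ('a, 'b) lop = "'a set \<times> ('a \<Rightarrow> 'b)"

definition opdom :: "('a, 'b) lop \<Rightarrow> 'a set" where "opdom T = fst T"
definition opfun :: "('a, 'b) lop \<Rightarrow> 'a \<Rightarrow> 'b" where "opfun T = snd T"

definition csubspace :: "'a::complex_hilbert set \<Rightarrow> bool" where
  "csubspace S \<longleftrightarrow> 0 \<in> S \<and> (\<forall>x\<in>S. \<forall>y\<in>S. x + y \<in> S) \<and> (\<forall>c. \<forall>x\<in>S. c *\<^sub>C x \<in> S)"

definition linear_op :: "('a::complex_hilbert, 'b::complex_hilbert) lop \<Rightarrow> bool" where
  "linear_op T \<longleftrightarrow> csubspace (opdom T) \<and>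
     (\<forall>x\<in>opdom T. \<forall>y\<in>opdom T. opfun T (x + y) = opfun T x + opfun T y) \<and>
     (\<forall>c. \<forall>x\<in>opdom T. opfun T (c *\<^sub>C x) = c *\<^sub>C opfun T x)"

definition graph_op :: "('a, 'b) lop \<Rightarrow> ('a \<times> 'b) set" where
  "graph_op T = {(x, opfun T x) | x. x \<in> opdom T}"

definition closed_op :: "('a::complex_hilbert, 'b::complex_hilbert) lop \<Rightarrow> bool" where
  "closed_op T \<longleftrightarrow> linear_op T \<and> closed (graph_op T)"

definition densely_defined :: "('a::complex_hilbert, 'b) lop \<Rightarrow> bool" where
  "densely_defined T \<longleftrightarrow> closure (opdom T) = UNIV"

definition everywhere_defined :: "('a, 'b) lop \<Rightarrow> bool" where
  "everywhere_defined T \<longleftrightarrow> opdom T = UNIV"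

definition bounded_op :: "('a::complex_hilbert, 'b::complex_hilbert) lop \<Rightarrow> bool" where
  "bounded_op T \<longleftrightarrow> (\<exists>C. \<forall>x\<in>opdom T. norm (opfun T x) \<le> C * norm x)"

definition injective_op :: "('a, 'b) lop \<Rightarrow> bool" where
  "injective_op T \<longleftrightarrow> inj_on (opfun T) (opdom T)"

definition inverse_op :: "('a, 'b) lop \<Rightarrow> ('b, 'a) lop" where
  "inverse_op T = (opfun T ` opdom T, the_inv_into (opdom T) (opfun T))"

definition shift_op :: "('a::complex_hilbert, 'a) lop \<Rightarrow> complex \<Rightarrow> ('a, 'a) lop" where
  "shift_op A l = (opdom A, \<lambda>x. opfun A x - l *\<^sub>C x)"

definition intertwining :: "('a::complex_hilbert, 'b::complex_hilbert) lop \<Rightarrow>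
    ('a, 'a) lop \<Rightarrow> ('b, 'b) lop \<Rightarrow> bool" where
  "intertwining T A B \<longleftrightarrow>
     closed_op T \<and> densely_defined T \<and>
     opdom A \<subseteq> opdom T \<and> opfun A ` opdom A \<subseteq> opdom T \<and>
     opfun T ` opdom A \<subseteq> opdom B \<and>
     (\<forall>\<xi>\<in>opdom A. opfun B (opfun T \<xi>) = opfun T (opfun A \<xi>))"

text \<open>A \<stileturn> B via T: T is an injective intertwining operator with densely defined inverse.\<close>
definition quasi_sim_via :: "('a::complex_hilbert, 'a) lop \<Rightarrow> ('b::complex_hilbert, 'b) lop \<Rightarrow>
    ('a, 'b) lop \<Rightarrow> bool" where
  "quasi_sim_via A B T \<longleftrightarrow> intertwining T A B \<and> injective_op T \<and> densely_defined (inverse_op T)"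

definition quasi_sim :: "('a::complex_hilbert, 'a) lop \<Rightarrow> ('b::complex_hilbert, 'b) lop \<Rightarrow> bool" where
  "quasi_sim A B \<longleftrightarrow> (\<exists>T. quasi_sim_via A B T)"

definition resolvent_set :: "('a::complex_hilbert, 'a) lop \<Rightarrow> complex set" where
  "resolvent_set A = {l. injective_op (shift_op A l) \<and>
      everywhere_defined (inverse_op (shift_op A l)) \<and> bounded_op (inverse_op (shift_op A l))}"

definition spectrum_op :: "('a::complex_hilbert, 'a) lop \<Rightarrow> complex set" where
  "spectrum_op A = UNIV - resolvent_set A"

definition point_spectrum :: "('a::complex_hilbert, 'a) lop \<Rightarrow> complex set" where
  "point_spectrum A = {l. \<exists>x\<in>opdom A. x \<noteq> 0 \<and> opfun A x = l *\<^sub>C x}"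

end

theory Submission
  imports Defs
begin

lemma iunit_zero: "iunit (0::'a::complex_hilbert) = 0"
  using iunit_scaleR[of 0 "0::'a"] by simp

lemma iunit_minus: "iunit (- x::'a::complex_hilbert) = - iunit x"
  using iunit_scaleR[of "-1" x] by simp

lemma iunit_diff: "iunit (x - y::'a::complex_hilbert) = iunit x - iunit y"
  using iunit_add[of x "-y"] iunit_minus[of y] by simp

lemma iunit_norm: "norm (iunit x::'a::complex_hilbert) = norm x"
  by (simp add: norm_eq_sqrt_inner iunit_inner)

lemma iunit_bl: "bounded_linear (iunit :: 'a::complex_hilbert \<Rightarrow> 'a)"
  by (rule bounded_linear_intro[of _ 1]) (simp_all add: iunit_add iunit_scaleR iunit_norm)

lemma scaleC_cont: "continuous_on UNIV (\<lambda>x::'a::complex_hilbert. c *\<^sub>C x)"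
  unfolding scaleC_def
  by (intro continuous_intros linear_continuous_on iunit_bl)

lemma scaleC_add: "c *\<^sub>C (x + y) = c *\<^sub>C x + c *\<^sub>C (y::'a::complex_hilbert)"
  by (simp add: scaleC_def iunit_add algebra_simps)

lemma scaleC_diff: "c *\<^sub>C (x - y) = c *\<^sub>C x - c *\<^sub>C (y::'a::complex_hilbert)"
  by (simp add: scaleC_def iunit_diff algebra_simps)

lemma scaleC_zero: "c *\<^sub>C (0::'a::complex_hilbert) = 0"
  by (simp add: scaleC_def iunit_zero)

lemma scaleC_real: "(complex_of_real r) *\<^sub>C (x::'a::complex_hilbert) = r *\<^sub>R x"
  by (simp add: scaleC_def)

lemma scaleC_minus1: "(-1) *\<^sub>C (x::'a::complex_hilbert) = - x"
  by (simp add: scaleC_def)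

lemma scaleC_scaleR: "c *\<^sub>C (r *\<^sub>R x) = r *\<^sub>R (c *\<^sub>C (x::'a::complex_hilbert))"
  by (simp add: scaleC_def iunit_scaleR algebra_simps)

context
  fixes T :: "('a::complex_hilbert, 'b::complex_hilbert) lop"
  assumes L: "linear_op T"
begin

lemma lo_add_mem: "x \<in> opdom T \<Longrightarrow> y \<in> opdom T \<Longrightarrow> x + y \<in> opdom T"
  using L by (simp add: linear_op_def csubspace_def)

lemma lo_scaleC_mem: "x \<in> opdom T \<Longrightarrow> c *\<^sub>C x \<in> opdom T"
  using L by (simp add: linear_op_def csubspace_def)

lemma lo_zero_mem: "0 \<in> opdom T"
  using L by (simp add: linear_op_def csubspace_def)

lemma lo_scaleR_mem: "x \<in> opdom T \<Longrightarrow> r *\<^sub>R x \<in> opdom T"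
  using lo_scaleC_mem[of x "complex_of_real r"] by (simp add: scaleC_real)

lemma lo_diff_mem: "x \<in> opdom T \<Longrightarrow> y \<in> opdom T \<Longrightarrow> x - y \<in> opdom T"
  using lo_add_mem[of x "-y"] lo_scaleC_mem[of y "-1"] by (simp add: scaleC_minus1)

lemma lo_add: "x \<in> opdom T \<Longrightarrow> y \<in> opdom T \<Longrightarrow> opfun T (x + y) = opfun T x + opfun T y"
  using L by (simp add: linear_op_def)

lemma lo_scaleC: "x \<in> opdom T \<Longrightarrow> opfun T (c *\<^sub>C x) = c *\<^sub>C opfun T x"
  using L by (simp add: linear_op_def)

lemma lo_scaleR: "x \<in> opdom T \<Longrightarrow> opfun T (r *\<^sub>R x) = r *\<^sub>R opfun T x"
  using lo_scaleC[of x "complex_of_real r"] by (simp add: scaleC_real)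

lemma lo_diff: "x \<in> opdom T \<Longrightarrow> y \<in> opdom T \<Longrightarrow> opfun T (x - y) = opfun T x - opfun T y"
  using lo_add[of x "-y"] lo_scaleC[of y "-1"] lo_scaleC_mem[of y "-1"] by (simp add: scaleC_minus1)

lemma lo_zero: "opfun T 0 = 0"
  using lo_diff[OF lo_zero_mem lo_zero_mem] by simp

end

lemma intertw_linear: "intertwining T A B \<Longrightarrow> linear_op T"
  by (simp add: intertwining_def closed_op_def)

lemma point_spectrum_sub:
  assumes "quasi_sim_via A B T"
  shows "point_spectrum A \<subseteq> point_spectrum B"
proof
  fix l assume "l \<in> point_spectrum A"
  then obtain x where x: "x \<in> opdom A" "x \<noteq> 0" "opfun A x = l *\<^sub>C x"
    by (auto simp: point_spectrum_def)
  have I: "intertwining T A B" and inj: "injective_op T" using assms by (auto simp: quasi_sim_via_def)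
  have L: "linear_op T" using intertw_linear[OF I] .
  have xT: "x \<in> opdom T" using I x by (auto simp: intertwining_def)
  have TxB: "opfun T x \<in> opdom B" using I x by (auto simp: intertwining_def)
  have "opfun B (opfun T x) = opfun T (opfun A x)" using I x by (auto simp: intertwining_def)
  also have "\<dots> = l *\<^sub>C opfun T x" using x(3) lo_scaleC[OF L xT] by simp
  finally have e: "opfun B (opfun T x) = l *\<^sub>C opfun T x" .
  have "opfun T x \<noteq> 0"
  proof
    assume "opfun T x = 0"
    then have "opfun T x = opfun T 0" using lo_zero[OF L] by simp
    then have "x = 0" using inj xT lo_zero_mem[OF L] by (auto simp: injective_op_def inj_on_def)
    with x show False by simp
  qed
  then show "l \<in> point_spectrum B" using TxB e by (auto simp: point_spectrum_def)
qed

lemma baire_step: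
  fixes g :: "'a::banach \<Rightarrow> 'b::real_normed_vector"
  shows "\<exists>n x0 r. r > 0 \<and> ball x0 r \<subseteq> closure {x. norm (g x) \<le> real n}"
proof (rule ccontr)
  assume H: "\<not> ?thesis"
  define F where "F n = closure {x. norm (g x) \<le> real n}" for n
  have "euclidean interior_of \<Union>(range F) = {}"
  proof (rule Baire_category_alt)
    show "completely_metrizable_space (euclidean :: 'a topology) \<or> locally_compact_space (euclidean :: 'a topology) \<and> regular_space (euclidean :: 'a topology)"
      by (rule disjI1, rule completely_metrizable_space_euclidean)
    show "countable (range F)" by simp
    fix T assume "T \<in> range F"
    then obtain n where T: "T = F n" by auto
    have "interior T = {}"
    proof (rule ccontr)
      assume "interior T \<noteq> {}"
      then obtain y where "y \<in> interior T" by auto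
      then obtain r where "r > 0" "ball y r \<subseteq> T"
        using mem_interior by blast
      with H T F_def show False by blast
    qed
    then show "closedin euclidean T \<and> euclidean interior_of T = {}"
      using closed_closure[of "{x. norm (g x) \<le> real n}"] T F_def by simp
  qed
  moreover have "\<Union>(range F) = UNIV"
  proof -
    have "x \<in> \<Union>(range F)" for x
    proof -
      obtain n where "norm (g x) \<le> real n" using real_arch_simple by auto
      then have "x \<in> F n" unfolding F_def by (meson closure_subset mem_Collect_eq subsetD)
      then show ?thesis by auto
    qed
    then show ?thesis by auto
  qed
  ultimately show False by simp
qed

lemma approx_step:
  fixes g :: "'a::banach \<Rightarrow> 'b::real_normed_vector"
  assumes lin: "linear g"
  shows "\<exists>M\<ge>0. \<forall>x e. e > 0 \<longrightarrow> (\<exists>x'. dist x x' < e \<and> norm (g x') \<le> M * norm x)"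
proof -
  obtain n x0 r where r: "r > 0" and B: "ball x0 r \<subseteq> closure {x. norm (g x) \<le> real n}"
    using baire_step by blast
  have P: "\<exists>w. norm (g w) \<le> 2 * real n \<and> dist w z < e" if "norm z < r" "e > 0" for z e
  proof -
    have "x0 + z \<in> closure {x. norm (g x) \<le> real n}" using B that by (auto simp: dist_norm)
    then obtain a where a: "norm (g a) \<le> real n" "dist a (x0 + z) < e/2"
      using \<open>e>0\<close> unfolding closure_approachable by (metis half_gt_zero mem_Collect_eq)
    have "x0 \<in> closure {x. norm (g x) \<le> real n}" using B r by auto
    then obtain b where b: "norm (g b) \<le> real n" "dist b x0 < e/2"
      using \<open>e>0\<close> unfolding closure_approachable by (metis half_gt_zero mem_Collect_eq)
    have "norm (g (a - b)) \<le> 2 * real n"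
      using a b linear_diff[OF lin, of a b] norm_triangle_ineq4[of "g a" "g b"] by simp
    moreover have "dist (a - b) z < e"
    proof -
      have "dist (a - b) z = norm ((a - (x0 + z)) - (b - x0))" by (simp add: dist_norm algebra_simps)
      also have "\<dots> \<le> norm (a - (x0 + z)) + norm (b - x0)" by (rule norm_triangle_ineq4)
      also have "\<dots> < e" using a b by (simp add: dist_norm)
      finally show ?thesis .
    qed
    ultimately show ?thesis by blast
  qed
  define M where "M = 4 * real n / r"
  have "M \<ge> 0" using r by (simp add: M_def)
  moreover have "\<exists>x'. dist x x' < e \<and> norm (g x') \<le> M * norm x" if "e > 0" for x e
  proof (cases "x = 0")
    case True
    then show ?thesis using that linear_0[OF lin] by (intro exI[of _ 0]) auto
  next
    case False
    define t where "t = r / (2 * norm x)"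
    have t: "t > 0" using r False by (simp add: t_def)
    have "norm (t *\<^sub>R x) < r" using r False by (simp add: t_def)
    then obtain w where w: "norm (g w) \<le> 2 * real n" "dist w (t *\<^sub>R x) < t * e"
      using P[of "t *\<^sub>R x" "t * e"] t \<open>e>0\<close> by auto
    have "dist x ((1/t) *\<^sub>R w) = (1/t) * dist w (t *\<^sub>R x)"
    proof -
      have "x - (1/t) *\<^sub>R w = (1/t) *\<^sub>R (t *\<^sub>R x - w)" using t by (simp add: algebra_simps)
      then show ?thesis using t by (simp add: dist_norm norm_minus_commute)
    qed
    also have "\<dots> < (1/t) * (t * e)" using w t by (intro mult_strict_left_mono) auto
    also have "\<dots> = e" using t by simp
    finally have d: "dist x ((1/t) *\<^sub>R w) < e" .
    have "norm (g ((1/t) *\<^sub>R w)) = (1/t) * norm (g w)"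
      using t linear_scale[OF lin] by simp
    also have "\<dots> \<le> (1/t) * (2 * real n)" using w t by (intro mult_left_mono) auto
    also have "\<dots> = M * norm x" using r False by (simp add: t_def M_def field_simps)
    finally show ?thesis using d by blast
  qed
  ultimately show ?thesis by blast
qed

lemma closed_graph_bounded:
  fixes g :: "'a::banach \<Rightarrow> 'b::banach"
  assumes lin: "linear g" and cl: "closed (range (\<lambda>x. (x, g x)))"
  shows "\<exists>C. \<forall>x. norm (g x) \<le> C * norm x"
proof -
  obtain M where M: "M \<ge> 0" and Q0: "\<forall>x e. e > 0 \<longrightarrow> (\<exists>x'. dist x x' < e \<and> norm (g x') \<le> M * norm x)"
    using approx_step[OF lin] by auto
  have Q: "\<exists>x'. dist x x' < e \<and> norm (g x') \<le> M * norm x" if "e > 0" for x e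
    using Q0 that by simp
  have "norm (g x) \<le> (2 * M) * norm x" for x
  proof (cases "x = 0")
    case True
    then show ?thesis using linear_0[OF lin] by simp
  next
    case False
    define e where "e = norm x"
    have e: "e > 0" using False by (simp add: e_def)
    define c where "c k z = (SOME x'. dist z x' < e / 2 ^ Suc k \<and> norm (g x') \<le> M * norm z)" for k z
    have c: "dist z (c k z) < e / 2 ^ Suc k \<and> norm (g (c k z)) \<le> M * norm z" for k z
      unfolding c_def by (rule someI_ex, rule Q) (use e in simp)
    define xs where "xs = rec_nat x (\<lambda>k z. z - c k z)"
    have xs0: "xs 0 = x" and xsS: "xs (Suc k) = xs k - c k (xs k)" for k
      by (simp_all add: xs_def)
    define d where "d k = c k (xs k)" for k
    have nxs: "norm (xs k) \<le> e / 2 ^ k" for k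
    proof (induction k)
      case 0 then show ?case by (simp add: xs0 e_def)
    next
      case (Suc k)
      have "norm (xs (Suc k)) = dist (xs k) (c k (xs k))" by (simp add: xsS dist_norm)
      also have "\<dots> \<le> e / 2 ^ Suc k" using c[of "xs k" k] by simp
      finally show ?case .
    qed
    have ngd: "norm (g (d k)) \<le> (M * e) * (1/2) ^ k" for k
    proof -
      have "norm (g (d k)) \<le> M * norm (xs k)" using c[of "xs k" k] by (simp add: d_def)
      also have "\<dots> \<le> M * (e / 2 ^ k)" using nxs[of k] M by (rule mult_left_mono)
      finally show ?thesis by (simp add: power_divide)
    qed
    have sg: "summable (\<lambda>k. (M * e) * (1/2::real) ^ k)"
      by (intro summable_mult summable_geometric) simp
    have sgd: "summable (\<lambda>k. g (d k))"
      by (rule summable_comparison_test'[OF sg]) (rule ngd)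
    have sumd: "(\<Sum>k<N. d k) = x - xs N" for N
      by (induction N) (simp_all add: xs0 xsS d_def)
    have "(\<lambda>N. e / 2 ^ N) \<longlonglongrightarrow> 0"
      by (intro LIMSEQ_divide_realpow_zero) auto
    then have "xs \<longlonglongrightarrow> 0"
      by (rule Lim_null_comparison[rotated]) (use nxs in auto)
    then have "(\<lambda>N. x - xs N) \<longlonglongrightarrow> x - 0" by (intro tendsto_diff tendsto_const)
    then have L1: "(\<lambda>N. \<Sum>k<N. d k) \<longlonglongrightarrow> x" unfolding sumd by simp
    have gs: "g (\<Sum>k<N. d k) = (\<Sum>k<N. g (d k))" for N
      by (rule linear_sum[OF lin])
    have L2: "(\<lambda>N. g (\<Sum>k<N. d k)) \<longlonglongrightarrow> (\<Sum>k. g (d k))"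
      unfolding gs by (rule summable_LIMSEQ[OF sgd])
    have L3: "((\<lambda>N. ((\<Sum>k<N. d k), g (\<Sum>k<N. d k))) \<longlonglongrightarrow> (x, (\<Sum>k. g (d k))))"
      using L1 L2 by (rule tendsto_Pair)
    have "(x, (\<Sum>k. g (d k))) \<in> range (\<lambda>x. (x, g x))"
      by (rule closed_sequentially[OF cl _ L3]) (rule rangeI)
    then have gx: "g x = (\<Sum>k. g (d k))" by auto
    have "norm (\<Sum>k. g (d k)) \<le> (\<Sum>k. (M * e) * (1/2::real) ^ k)"
      by (rule norm_suminf_le[OF ngd sg])
    also have "\<dots> = (M * e) * 2"
      by (simp add: suminf_mult suminf_geometric)
    finally show ?thesis using gx by (simp add: e_def)
  qed
  then show ?thesis by blast
qed


instance complex_hilbert \<subseteq> banach ..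

lemma resolvent_sub:
  fixes A :: "('a::complex_hilbert, 'a) lop" and B :: "('b::complex_hilbert, 'b) lop"
  assumes cA: "closed_op A" and cB: "closed_op B"
    and qAB: "quasi_sim_via A B T" and qBA: "quasi_sim_via B A U"
    and ed: "everywhere_defined (inverse_op T)"
  shows "resolvent_set A \<subseteq> resolvent_set B"
proof
  fix l assume lA: "l \<in> resolvent_set A"
  define f where "f = (\<lambda>x. opfun B x - l *\<^sub>C x)"
  define fA where "fA = (\<lambda>x. opfun A x - l *\<^sub>C x)"
  have LA: "linear_op A" using cA by (simp add: closed_op_def)
  have LB: "linear_op B" using cB by (simp add: closed_op_def)
  have I: "intertwining T A B" using qAB by (simp add: quasi_sim_via_def)
  have LT: "linear_op T" using intertw_linear[OF I] .
  have injA: "inj_on fA (opdom A)" and ranA: "fA ` opdom A = UNIV"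
    using lA by (simp_all add: resolvent_set_def injective_op_def everywhere_defined_def
        inverse_op_def opdom_def opfun_def shift_op_def fA_def)
  have ranT: "opfun T ` opdom T = UNIV"
    using ed by (simp add: everywhere_defined_def inverse_op_def opdom_def)
  have injB: "inj_on f (opdom B)"
  proof (rule inj_onI, rule ccontr)
    fix x y assume x: "x \<in> opdom B" and y: "y \<in> opdom B" and e: "f x = f y" and ne: "x \<noteq> y"
    have z: "x - y \<in> opdom B" using lo_diff_mem[OF LB x y] .
    have "opfun B (x - y) = opfun B x - opfun B y" using lo_diff[OF LB x y] .
    also have "\<dots> = l *\<^sub>C x - l *\<^sub>C y" using e by (simp add: f_def algebra_simps)
    also have "\<dots> = l *\<^sub>C (x - y)" by (simp add: scaleC_diff)
    finally have "l \<in> point_spectrum B" using z ne unfolding point_spectrum_def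
      by (intro CollectI bexI[of _ "x - y"]) auto
    then have "l \<in> point_spectrum A" using point_spectrum_sub[OF qBA] by blast
    then obtain w where w: "w \<in> opdom A" "w \<noteq> 0" "opfun A w = l *\<^sub>C w"
      by (auto simp: point_spectrum_def)
    have "fA w = fA 0" using w lo_zero[OF LA] by (simp add: fA_def scaleC_zero)
    then have "w = 0" using injA w(1) lo_zero_mem[OF LA] by (auto simp: inj_on_def)
    with w show False by simp
  qed
  have ranB: "f ` opdom B = UNIV"
  proof (intro set_eqI iffI)
    fix k :: 'b
    obtain h where h: "h \<in> opdom T" "opfun T h = k" using ranT by (metis UNIV_I imageE)
    obtain \<xi> where xi: "\<xi> \<in> opdom A" "fA \<xi> = h" using ranA by (metis UNIV_I imageE)
    have xiT: "\<xi> \<in> opdom T" and AxiT: "opfun A \<xi> \<in> opdom T" and TxiB: "opfun T \<xi> \<in> opdom B"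
      and comm: "opfun B (opfun T \<xi>) = opfun T (opfun A \<xi>)"
      using I xi(1) by (auto simp: intertwining_def)
    have "f (opfun T \<xi>) = opfun T (opfun A \<xi>) - l *\<^sub>C opfun T \<xi>" using comm by (simp add: f_def)
    also have "\<dots> = opfun T (opfun A \<xi>) - opfun T (l *\<^sub>C \<xi>)" using lo_scaleC[OF LT xiT] by simp
    also have "\<dots> = opfun T (fA \<xi>)"
      using lo_diff[OF LT AxiT lo_scaleC_mem[OF LT xiT]] by (simp add: fA_def)
    finally have "f (opfun T \<xi>) = k" using xi h by simp
    then show "k \<in> f ` opdom B" using TxiB by blast
  qed simp
  define g where "g = the_inv_into (opdom B) f"
  have gB: "g y \<in> opdom B" and fg: "f (g y) = y" for y
    using the_inv_into_into[OF injB, of y "opdom B"] f_the_inv_into_f[OF injB, of y] ranB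
    by (auto simp: g_def)
  have geq: "g y = x" if "x \<in> opdom B" "f x = y" for x y
    using the_inv_into_f_eq[OF injB that(2) that(1)] by (simp add: g_def)
  have lin: "linear g"
  proof (rule linearI)
    fix a b
    show "g (a + b) = g a + g b"
    proof (rule geq)
      show "g a + g b \<in> opdom B" using lo_add_mem[OF LB gB gB] .
      show "f (g a + g b) = a + b"
        using lo_add[OF LB gB[of a] gB[of b]] fg[of a] fg[of b] by (simp add: f_def scaleC_add algebra_simps)
    qed
  next
    fix r :: real and a
    show "g (r *\<^sub>R a) = r *\<^sub>R g a"
    proof (rule geq)
      show "r *\<^sub>R g a \<in> opdom B" using lo_scaleR_mem[OF LB gB] .
      show "f (r *\<^sub>R g a) = r *\<^sub>R a"
        using lo_scaleR[OF LB gB[of a], of r] fg[of a] by (simp add: f_def scaleC_scaleR algebra_simps)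
    qed
  qed
  have gr1: "graph_op (shift_op B l) = (\<lambda>p. (fst p, snd p + l *\<^sub>C fst p)) -` graph_op B"
    by (auto simp: graph_op_def shift_op_def opdom_def opfun_def eq_diff_eq)
  have contp: "continuous_on UNIV (\<lambda>p::'b\<times>'b. (fst p, snd p + l *\<^sub>C fst p))"
    by (intro continuous_intros continuous_on_compose2[OF scaleC_cont]) auto
  have cl1: "closed (graph_op (shift_op B l))"
    unfolding gr1
    by (rule continuous_closed_vimage) (use cB contp in \<open>auto simp: closed_op_def continuous_on_eq_continuous_at\<close>)
  have gr2: "range (\<lambda>y. (y, g y)) = prod.swap -` graph_op (shift_op B l)"
  proof (intro set_eqI iffI)
    fix p assume "p \<in> range (\<lambda>y. (y, g y))"
    then obtain y where p: "p = (y, g y)" by auto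
    show "p \<in> prod.swap -` graph_op (shift_op B l)"
      using p gB[of y] fg[of y] by (auto simp: graph_op_def shift_op_def opdom_def opfun_def f_def)
  next
    fix p assume "p \<in> prod.swap -` graph_op (shift_op B l)"
    then obtain x where x: "x \<in> opdom B" "p = (f x, x)"
      by (cases p) (auto simp: graph_op_def shift_op_def opdom_def opfun_def f_def)
    then show "p \<in> range (\<lambda>y. (y, g y))" using geq[OF x(1) refl] by auto
  qed
  have cl2: "closed (range (\<lambda>y. (y, g y)))"
    unfolding gr2
    by (rule continuous_closed_vimage[OF cl1]) (intro continuous_intros)
  obtain C where C: "\<forall>x. norm (g x) \<le> C * norm x"
    using closed_graph_bounded[OF lin cl2] by blast
  have gd: "the_inv_into (fst B) f = g" by (simp add: g_def opdom_def)
  have sB: "shift_op B l = (opdom B, f)" by (simp add: shift_op_def f_def)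
  show "l \<in> resolvent_set B"
    unfolding resolvent_set_def mem_Collect_eq sB
    using injB ranB C
    by (auto simp: injective_op_def everywhere_defined_def bounded_op_def inverse_op_def
        opdom_def opfun_def gd)
qed

theorem proposition3p21:
  fixes A :: "('a::complex_hilbert, 'a) lop" and B :: "('b::complex_hilbert, 'b) lop"
    and T_AB :: "('a, 'b) lop" and T_BA :: "('b, 'a) lop"
  assumes "closed_op A" and "densely_defined A"
    and "closed_op B" and "densely_defined B"
    and "quasi_sim_via A B T_AB" and "quasi_sim_via B A T_BA"
    and "everywhere_defined (inverse_op T_AB)" and "bounded_op (inverse_op T_AB)"
    and "everywhere_defined (inverse_op T_BA)" and "bounded_op (inverse_op T_BA)"
  shows "point_spectrum A = point_spectrum B \<and> resolvent_set A = resolvent_set B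
    \<and> spectrum_op A = spectrum_op B"
proof -
  have p: "point_spectrum A = point_spectrum B"
    using point_spectrum_sub[OF assms(5)] point_spectrum_sub[OF assms(6)] by blast
  have r: "resolvent_set A = resolvent_set B"
    using resolvent_sub[OF assms(1) assms(3) assms(5) assms(6) assms(7)]
      resolvent_sub[OF assms(3) assms(1) assms(6) assms(5) assms(9)] by blast
  show ?thesis using p r by (simp add: spectrum_op_def)
qed

end
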